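(* Let $H\in C^\infty(\mathbb{R}/\mathbb{Z}\times\mathbb{D})$ vanish identically on $\mathbb{R}/\mathbb{Z}\times\partial\mathbb{D}$. Then there exists an approximating sequence $(H_n)_{n\in\mathbb{N}}$ for $H$ such that (1) $\mathrm{supp}\,H_n\subset\mathbb{R}/\mathbb{Z}\times\mathbb{D}_{1+1/n}$ for every $n$, and (2) $\sup_{n\in\mathbb{N}}\|\nabla H_n\|_{C^0(\mathbb{R}/\mathbb{Z}\times(\mathbb{R}^2\setminus\mathbb{D}))}<\infty$.
   Context: $\mathbb{D}\subset\mathbb{R}^2$ is the closed unit disc and $\mathbb{D}_R$ the closed disc of radius $R$ centered at $0$; $\nabla$ is the spatial gradient. An approximating sequence for $H$ is a sequence $H_n\in C^\infty_c(\mathbb{R}/\mathbb{Z}\times\mathbb{R}^2)$ such that $H_n$ restricted to $\mathbb{R}/\mathbb{Z}\times\mathbb{D}$ equals $H$ and $\lim_{n\to\infty}\|H_n\|_{C^0(\mathbb{R}/\mathbb{Z}\times(\mathbb{R}^2\setminus\mathbb{D}))}=0$. *)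

theory Defs
  imports "HOL-Analysis.Analysis"
begin

fun k_smooth :: "nat \<Rightarrow> ('a::euclidean_space \<Rightarrow> real) \<Rightarrow> bool" where
  "k_smooth 0 f = continuous_on UNIV f"
| "k_smooth (Suc k) f = (continuous_on UNIV f \<and> f differentiable_on UNIV \<and>
      (\<forall>v. k_smooth k (\<lambda>x. frechet_derivative f (at x) v)))"

definition smooth :: "('a::euclidean_space \<Rightarrow> real) \<Rightarrow> bool" where
  "smooth f \<longleftrightarrow> (\<forall>k. k_smooth k f)"

text \<open>Points are pairs (t, x) with t the time coordinate (1-periodic, i.e. R/Z) and x in R^2.\<close>
definition time_periodic :: "(real \<times> (real^2) \<Rightarrow> real) \<Rightarrow> bool" where
  "time_periodic f \<longleftrightarrow> (\<forall>t x. f (t + 1, x) = f (t, x))"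

definition supp :: "(real \<times> (real^2) \<Rightarrow> real) \<Rightarrow> (real \<times> (real^2)) set" where
  "supp f = closure {p. f p \<noteq> 0}"

definition spatial_grad :: "(real \<times> (real^2) \<Rightarrow> real) \<Rightarrow> real \<Rightarrow> real^2 \<Rightarrow> real^2" where
  "spatial_grad f t x = (\<chi> i. frechet_derivative (\<lambda>y. f (t, y)) (at x) (axis i 1))"

text \<open>C^\<infinity>_c(R/Z x R^2): smooth, 1-periodic in time, support compact modulo time.\<close>
definition smooth_compact_supp :: "(real \<times> (real^2) \<Rightarrow> real) \<Rightarrow> bool" where
  "smooth_compact_supp f \<longleftrightarrow> smooth f \<and> time_periodic f \<and>
     (\<exists>R. supp f \<subseteq> UNIV \<times> cball 0 R)"

definition approximating_sequence ::
  "(nat \<Rightarrow> real \<times> (real^2) \<Rightarrow> real) \<Rightarrow> (real \<times> (real^2) \<Rightarrow> real) \<Rightarrow> bool" where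
  "approximating_sequence Hs H \<longleftrightarrow>
     (\<forall>n. smooth_compact_supp (Hs n)) \<and>
     (\<forall>n t x. norm x \<le> 1 \<longrightarrow> Hs n (t, x) = H (t, x)) \<and>
     (\<forall>e>0. \<exists>N. \<forall>n\<ge>N. \<forall>t x. norm x > 1 \<longrightarrow> \<bar>Hs n (t, x)\<bar> \<le> e)"

text \<open>H in C^\<infinity>(R/Z x D): restriction to R/Z x D of a smooth 1-periodic function on R x R^2.\<close>
definition smooth_on_cyl_disc :: "(real \<times> (real^2) \<Rightarrow> real) \<Rightarrow> bool" where
  "smooth_on_cyl_disc H \<longleftrightarrow>
     (\<forall>t x. norm x \<le> 1 \<longrightarrow> H (t + 1, x) = H (t, x)) \<and>
     (\<exists>G. smooth G \<and> time_periodic G \<and> (\<forall>t x. norm x \<le> 1 \<longrightarrow> G (t, x) = H (t, x)))"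

end

theory Submission
  imports Defs "HOL-Computational_Algebra.Polynomial"
begin


lemma ks_cont: "k_smooth k f \<Longrightarrow> continuous_on UNIV f"
  by (cases k) auto

lemma ks_mono: "k_smooth (Suc k) f \<Longrightarrow> k_smooth k f"
proof (induction k arbitrary: f)
  case 0 then show ?case by simp
next
  case (Suc k) then show ?case by (metis k_smooth.simps(2))
qed

lemma ks_le: "k \<le> m \<Longrightarrow> k_smooth m f \<Longrightarrow> k_smooth k f"
proof (induction m rule: dec_induct)
  case base then show ?case by simp
next
  case (step n) then show ?case using ks_mono by blast
qed

lemma fd_works: "f differentiable_on UNIV \<Longrightarrow> (f has_derivative frechet_derivative f (at x)) (at x)"
  by (meson UNIV_I differentiable_on_def frechet_derivative_works at_within_open open_UNIV)

lemma ks_const: "k_smooth k (\<lambda>x. c)"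
proof (induction k arbitrary: c)
  case 0 then show ?case by simp
next
  case (Suc k)
  have "frechet_derivative (\<lambda>x::'a. c) (at x) = (\<lambda>v. 0)" for x
    using frechet_derivative_at[OF has_derivative_const] by metis
  then show ?case using Suc by (simp add: differentiable_on_def)
qed

lemma ks_linear: "linear f \<Longrightarrow> k_smooth k (f::'a::euclidean_space \<Rightarrow> real)"
proof (cases k)
  case 0 assume "linear f" then show ?thesis using 0 by (simp add: linear_continuous_on linear_conv_bounded_linear)
next
  case (Suc m)
  assume l: "linear f"
  then have bl: "bounded_linear f" by (simp add: linear_conv_bounded_linear)
  have "frechet_derivative f (at x) = f" for x
    using frechet_derivative_at[OF bounded_linear_imp_has_derivative[OF bl]] by metis
  moreover have "f differentiable_on UNIV"
    using bl bounded_linear_imp_differentiable differentiable_at_imp_differentiable_on by blast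
  moreover have "\<forall>v. k_smooth m (\<lambda>x::'a. f v)" using ks_const by blast
  ultimately show ?thesis using Suc bl by (simp add: linear_continuous_on)
qed

lemma ks_add: "k_smooth k f \<Longrightarrow> k_smooth k g \<Longrightarrow> k_smooth k (\<lambda>x. f x + g x)"
proof (induction k arbitrary: f g)
  case 0 then show ?case by (simp add: continuous_on_add)
next
  case (Suc k)
  have df: "f differentiable_on UNIV" and dg: "g differentiable_on UNIV" using Suc.prems by auto
  have "frechet_derivative (\<lambda>x. f x + g x) (at x) = (\<lambda>v. frechet_derivative f (at x) v + frechet_derivative g (at x) v)" for x
    by (rule frechet_derivative_at[symmetric], intro has_derivative_add fd_works df dg)
  moreover have "(\<lambda>x. f x + g x) differentiable_on UNIV" using df dg by (simp add: differentiable_on_add)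
  ultimately show ?case using Suc by (simp add: continuous_on_add)
qed

lemma ks_mult: "k_smooth k f \<Longrightarrow> k_smooth k g \<Longrightarrow> k_smooth k (\<lambda>x. f x * g x)"
proof (induction k arbitrary: f g)
  case 0 then show ?case by (simp add: continuous_on_mult)
next
  case (Suc k)
  have df: "f differentiable_on UNIV" and dg: "g differentiable_on UNIV" using Suc.prems by auto
  have "frechet_derivative (\<lambda>x. f x * g x) (at x) = (\<lambda>v. f x * frechet_derivative g (at x) v + frechet_derivative f (at x) v * g x)" for x
    by (rule frechet_derivative_at[symmetric], intro has_derivative_mult fd_works df dg)
  moreover have "(\<lambda>x. f x * g x) differentiable_on UNIV" using df dg by (simp add: differentiable_on_mult)
  moreover have "k_smooth k f" "k_smooth k g" using Suc.prems ks_mono by blast+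
  ultimately show ?case using Suc by (simp add: continuous_on_mult ks_add)
qed

lemma ks_sum: "finite I \<Longrightarrow> (\<And>i. i \<in> I \<Longrightarrow> k_smooth k (f i)) \<Longrightarrow> k_smooth k (\<lambda>x. \<Sum>i\<in>I. f i x)"
  by (induction I rule: finite_induct) (auto intro: ks_add ks_const)

fun rs :: "nat \<Rightarrow> real set \<Rightarrow> (real \<Rightarrow> real) \<Rightarrow> bool" where
  "rs 0 S f = continuous_on S f"
| "rs (Suc k) S f = (continuous_on S f \<and> (\<forall>x\<in>S. f differentiable at x) \<and> rs k S (deriv f))"

lemma ks_comp:
  assumes "open S" "\<And>x. u x \<in> S"
  shows "rs k S \<phi> \<Longrightarrow> k_smooth k u \<Longrightarrow> k_smooth k (\<lambda>x. \<phi> (u x))"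
proof (induction k arbitrary: \<phi>)
  case 0
  then show ?case using assms
    by (auto intro!: continuous_on_compose2[of S \<phi> UNIV u])
next
  case (Suc k)
  have du: "u differentiable_on UNIV" using Suc.prems by auto
  have dphi: "(\<phi> has_real_derivative deriv \<phi> (u x)) (at (u x))" for x
    using Suc.prems assms DERIV_deriv_iff_real_differentiable by auto
  have D: "((\<lambda>x. \<phi> (u x)) has_derivative (\<lambda>v. deriv \<phi> (u x) * frechet_derivative u (at x) v)) (at x)" for x
  proof -
    have "((\<lambda>x. \<phi> (u x)) has_derivative (\<lambda>v. (*) (deriv \<phi> (u x)) (frechet_derivative u (at x) v))) (at x)"
      by (rule has_derivative_compose[OF fd_works[OF du] dphi[unfolded has_field_derivative_def]])
    then show ?thesis by simp
  qed
  have fd: "frechet_derivative (\<lambda>x. \<phi> (u x)) (at x) = (\<lambda>v. deriv \<phi> (u x) * frechet_derivative u (at x) v)" for x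
    using frechet_derivative_at[OF D] by metis
  have "(\<lambda>x. \<phi> (u x)) differentiable_on UNIV"
    using D differentiable_at_imp_differentiable_on differentiable_def by blast
  moreover have "continuous_on UNIV (\<lambda>x. \<phi> (u x))"
    using Suc.prems assms by (intro continuous_on_compose2[of S \<phi> UNIV u]) auto
  moreover have "k_smooth k (\<lambda>x. deriv \<phi> (u x))"
    using Suc ks_mono by auto
  ultimately show ?case using Suc.prems fd by (auto intro: ks_mult)
qed



lemma rs_cong: "open S \<Longrightarrow> (\<And>x. x \<in> S \<Longrightarrow> f x = g x) \<Longrightarrow> rs k S f \<Longrightarrow> rs k S g"
proof (induction k arbitrary: f g)
  case 0 then show ?case by (metis continuous_on_cong rs.simps(1))
next
  case (Suc k)
  have ev: "eventually (\<lambda>y. f y = g y) (nhds x)" if "x \<in> S" for x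
    using Suc.prems(1,2) that eventually_nhds by blast
  have "continuous_on S g" using Suc.prems by (metis continuous_on_cong rs.simps(2))
  moreover have "g differentiable at x" if "x \<in> S" for x
  proof -
    have "DERIV f x :> deriv f x" using Suc.prems that DERIV_deriv_iff_real_differentiable by auto
    then have "DERIV g x :> deriv f x" using DERIV_cong_ev[OF refl ev[OF that] refl] by simp
    then show ?thesis using real_differentiable_def by blast
  qed
  moreover have "rs k S (deriv g)"
    using Suc.IH[of "deriv f" "deriv g"] Suc.prems deriv_cong_ev[OF ev] by auto
  ultimately show ?case by simp
qed

lemma rs_intro:
  assumes "open S" "\<And>x. x \<in> S \<Longrightarrow> (f has_real_derivative f' x) (at x)" "rs k S f'"
  shows "rs (Suc k) S f"
proof -
  have "continuous_on S f"
    using assms by (meson DERIV_isCont continuous_at_imp_continuous_on)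
  moreover have "\<forall>x\<in>S. f differentiable at x" using assms real_differentiable_def by blast
  moreover have "rs k S (deriv f)"
    using rs_cong[OF assms(1) _ assms(3), of "deriv f"] assms(2) DERIV_imp_deriv by metis
  ultimately show ?thesis by simp
qed

lemma rs_inv: "rs k {0<..} (\<lambda>x. c / x ^ m)"
proof (induction k arbitrary: c m)
  case 0 then show ?case by (simp, intro continuous_intros) auto
next
  case (Suc k)
  have "((\<lambda>x. c / x ^ m) has_real_derivative (- (c * real m) / x ^ Suc m)) (at x)" if "x \<in> {0<..}" for x
  proof -
    have "x \<noteq> 0" using that by simp
    have "((\<lambda>x. c / x ^ m) has_real_derivative (- (c * (real m * x ^ (m - 1))) / (x ^ m * x ^ m))) (at x)"
      using \<open>x \<noteq> 0\<close> by (auto intro!: derivative_eq_intros)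
    moreover have "- (c * (real m * x ^ (m - 1))) / (x ^ m * x ^ m) = - (c * real m) / x ^ Suc m"
      using \<open>x \<noteq> 0\<close> by (cases m) (auto simp: field_simps)
    ultimately show ?thesis by simp
  qed
  then show ?case by (intro rs_intro[OF _ _ Suc.IH[of "- (c * real m)" "Suc m"]]) auto
qed

lemma ks_real_rs: "k_smooth k (f::real \<Rightarrow> real) \<Longrightarrow> rs k UNIV f"
proof (induction k arbitrary: f)
  case 0 then show ?case by simp
next
  case (Suc k)
  have d: "f differentiable at x" for x using Suc.prems
    by (simp add: differentiable_on_def)
  have "frechet_derivative f (at x) = (*) (deriv f x)" for x
    using frechet_derivative_at d DERIV_deriv_iff_real_differentiable has_field_derivative_def by metis
  then have "deriv f = (\<lambda>x. frechet_derivative f (at x) 1)" by auto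
  then show ?case using Suc d by auto
qed



definition flat :: "real poly \<Rightarrow> real \<Rightarrow> real" where
  "flat p x = (if x > 0 then poly p (inverse x) * exp (- inverse x) else 0)"

definition nxt :: "real poly \<Rightarrow> real poly" where
  "nxt p = [:0, 0, 1:] * (p - pderiv p)"

lemma flat_deriv_pos:
  assumes "x > 0"
  shows "((\<lambda>x. poly p (inverse x) * exp (- inverse x)) has_real_derivative
           poly (nxt p) (inverse x) * exp (- inverse x)) (at x)"
proof -
  have x: "x \<noteq> 0" using assms by simp
  have d1: "DERIV (\<lambda>x. poly p (inverse x)) x :> poly (pderiv p) (inverse x) * (- (inverse x ^ Suc (Suc 0)))"
    by (rule DERIV_chain2[OF poly_DERIV DERIV_inverse[OF x]])
  have d2: "DERIV (\<lambda>x. exp (- inverse x)) x :> exp (- inverse x) * (- (- (inverse x ^ Suc (Suc 0))))"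
    by (rule DERIV_chain2[OF DERIV_exp DERIV_minus[OF DERIV_inverse[OF x]]])
  show ?thesis
    by (rule DERIV_cong[OF DERIV_mult[OF d1 d2]]) (simp add: nxt_def algebra_simps power2_eq_square)
qed

lemma poly_exp_lim: fixes p :: "real poly" shows "((\<lambda>y. poly p y * exp (- y) * y) \<longlongrightarrow> 0) at_top"
proof -
  have "((\<lambda>y. \<Sum>i\<le>degree p. coeff p i * (y ^ Suc i / exp y)) \<longlongrightarrow> (\<Sum>i\<le>degree p. coeff p i * 0)) at_top"
    by (intro tendsto_intros tendsto_power_div_exp_0)
  moreover have "(\<Sum>i\<le>degree p. coeff p i * (y ^ Suc i / exp y)) = poly p y * exp (- y) * y" for y
  proof -
    have "poly p y * exp (- y) * y = poly p y * y / exp y" by (simp add: exp_minus divide_inverse)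
    also have "\<dots> = (\<Sum>i\<le>degree p. coeff p i * y ^ i) * y / exp y" by (simp add: poly_altdef)
    also have "\<dots> = (\<Sum>i\<le>degree p. coeff p i * y ^ i * y / exp y)"
      by (simp add: sum_distrib_right sum_divide_distrib)
    also have "\<dots> = (\<Sum>i\<le>degree p. coeff p i * (y ^ Suc i / exp y))"
      by (intro sum.cong refl) (simp add: mult_ac)
    finally show ?thesis by simp
  qed
  ultimately show ?thesis by simp
qed

lemma flat_deriv0: "(flat p has_real_derivative 0) (at 0)"
proof -
  have "((\<lambda>y. (flat p y - flat p 0) / (y - 0)) \<longlongrightarrow> 0) (at 0)"
  proof (rule filterlim_split_at)
    have "eventually (\<lambda>y. 0 = (flat p y - flat p 0) / (y - 0)) (at_left (0::real))"
      unfolding eventually_at_left_field by (rule exI[of _ "-1"]) (auto simp: flat_def)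
    then show "((\<lambda>y. (flat p y - flat p 0) / (y - 0)) \<longlongrightarrow> 0) (at_left 0)"
      by (rule Lim_transform_eventually[OF tendsto_const])
  next
    have "eventually (\<lambda>y. poly p y * exp (- y) * y = (flat p (inverse y) - flat p 0) / (inverse y - 0)) at_top"
      using eventually_gt_at_top[of "0::real"] by eventually_elim (simp add: flat_def field_simps)
    then have "((\<lambda>y. (flat p (inverse y) - flat p 0) / (inverse y - 0)) \<longlongrightarrow> 0) at_top"
      by (rule Lim_transform_eventually[OF poly_exp_lim])
    then show "((\<lambda>y. (flat p y - flat p 0) / (y - 0)) \<longlongrightarrow> 0) (at_right 0)"
      by (simp add: filterlim_at_right_to_top)
  qed
  then show ?thesis by (simp add: has_field_derivative_iff)
qed

lemma flat_deriv: "(flat p has_real_derivative flat (nxt p) x) (at x)"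
proof (cases "x > 0")
  case True
  have e: "flat (nxt p) x = poly (nxt p) (inverse x) * exp (- inverse x)" using True by (simp add: flat_def)
  have eq: "\<And>y. y \<in> {0<..} \<Longrightarrow> poly p (inverse y) * exp (- inverse y) = flat p y"
    by (simp add: flat_def)
  show ?thesis unfolding e
    by (rule has_field_derivative_transform_within_open[OF flat_deriv_pos[OF True] open_greaterThan _ eq]) (use True in simp)
next
  case False
  show ?thesis
  proof (cases "x = 0")
    case True
    have "flat (nxt p) 0 = 0" by (simp add: flat_def)
    then show ?thesis using flat_deriv0 True by simp
  next
    case False
    then have x: "x < 0" using \<open>\<not> x > 0\<close> by simp
    then have e: "flat (nxt p) x = 0" by (simp add: flat_def)
    have eq: "\<And>y. y \<in> {..<0} \<Longrightarrow> 0 = flat p y"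
      by (simp add: flat_def)
    show ?thesis unfolding e
      by (rule has_field_derivative_transform_within_open[OF DERIV_const open_lessThan _ eq]) (use x in simp)
  qed
qed

lemma flat_rs: "rs k UNIV (flat p)"
proof (induction k arbitrary: p)
  case 0
  have "isCont (flat p) x" for x using DERIV_isCont[OF flat_deriv] .
  then show ?case by (simp add: continuous_at_imp_continuous_on)
next
  case (Suc k)
  show ?case by (rule rs_intro[OF _ flat_deriv Suc.IH]) auto
qed



definition psi :: "real \<Rightarrow> real" where
  "psi u = flat 1 (1 - u) / (flat 1 (1 - u) + flat 1 u)"

lemma flat1_pos: "x > 0 \<Longrightarrow> flat 1 x > 0" by (simp add: flat_def)
lemma flat1_nonneg: "flat 1 x \<ge> 0" by (simp add: flat_def)
lemma flat1_zero: "x \<le> 0 \<Longrightarrow> flat 1 x = 0" by (simp add: flat_def)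

lemma psi_den_pos: "flat 1 (1 - u) + flat 1 u > 0"
proof (cases "u < 1")
  case True then show ?thesis using flat1_pos[of "1 - u"] flat1_nonneg[of u] by simp
next
  case False then show ?thesis using flat1_pos[of u] flat1_nonneg[of "1 - u"] by simp
qed

lemma psi_one: "u \<le> 0 \<Longrightarrow> psi u = 1"
  using flat1_zero[of u] flat1_pos[of "1 - u"] by (simp add: psi_def)

lemma psi_zero: "u \<ge> 1 \<Longrightarrow> psi u = 0"
  using flat1_zero[of "1 - u"] by (simp add: psi_def)

lemma psi_bounds: "0 \<le> psi u" "psi u \<le> 1"
  using psi_den_pos[of u] flat1_nonneg[of u] flat1_nonneg[of "1 - u"]
  by (auto simp: psi_def divide_le_eq_1)

lemma psi_ks: "k_smooth k psi"
proof -
  have l1: "k_smooth k (\<lambda>u::real. 1 - u)"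
  proof -
    have "k_smooth k (\<lambda>u::real. 1 + (- u))"
      by (intro ks_add ks_const ks_linear) (simp add: linear_uminus)
    then show ?thesis by simp
  qed
  have a: "k_smooth k (\<lambda>u. flat 1 (1 - u))"
    by (rule ks_comp[OF open_UNIV UNIV_I flat_rs l1])
  have b: "k_smooth k (\<lambda>u. flat 1 u)"
    using ks_comp[OF open_UNIV UNIV_I flat_rs ks_linear[OF linear_id[unfolded id_def]]] .
  have c: "k_smooth k (\<lambda>u. 1 / (flat 1 (1 - u) + flat 1 u) ^ 1)"
    by (rule ks_comp[OF open_greaterThan _ rs_inv ks_add[OF a b]]) (use psi_den_pos in auto)
  have "k_smooth k (\<lambda>u. flat 1 (1 - u) * (1 / (flat 1 (1 - u) + flat 1 u) ^ 1))"
    by (rule ks_mult[OF a c])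
  moreover have "(\<lambda>u. flat 1 (1 - u) * (1 / (flat 1 (1 - u) + flat 1 u) ^ 1)) = psi"
    by (auto simp: psi_def)
  ultimately show ?thesis by simp
qed

lemma psi_rs: "rs k UNIV psi" using ks_real_rs[OF psi_ks] .

lemma psi_deriv: "(psi has_real_derivative deriv psi u) (at u)"
  using psi_rs[of 1] DERIV_deriv_iff_real_differentiable by auto

lemma psi_deriv_cont: "continuous_on UNIV (deriv psi)"
  using psi_rs[of 2] by (simp add: numeral_2_eq_2)

lemma psi_deriv_zero: "u > 1 \<Longrightarrow> deriv psi u = 0"
proof -
  assume u: "u > 1"
  have eq: "\<And>y. y \<in> {1<..} \<Longrightarrow> 0 = psi y" using psi_zero by simp
  have "(psi has_real_derivative 0) (at u)"
    by (rule has_field_derivative_transform_within_open[OF DERIV_const open_greaterThan _ eq]) (use u in simp)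
  then show ?thesis by (rule DERIV_imp_deriv)
qed

lemma psi_deriv_bound: "\<exists>M\<ge>0. \<forall>u\<in>{0..1}. \<bar>deriv psi u\<bar> \<le> M"
proof -
  have "compact (deriv psi ` {0..1})"
    by (rule compact_continuous_image[OF continuous_on_subset[OF psi_deriv_cont]]) auto
  then obtain B where "\<forall>y\<in>deriv psi ` {0..1}. norm y \<le> B"
    using compact_imp_bounded bounded_iff by metis
  then show ?thesis by (intro exI[of _ "max B 0"]) auto
qed



lemma periodic_frac:
  assumes "time_periodic G"
  shows "G (t, y) = G (frac t, y)"
proof -
  have nat: "G (s + real k, y) = G (s, y)" for s k
  proof (induction k)
    case 0 then show ?case by simp
  next
    case (Suc k)
    have "G (s + real (Suc k), y) = G ((s + real k) + 1, y)" by (simp add: algebra_simps)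
    also have "\<dots> = G (s + real k, y)" using assms by (simp add: time_periodic_def)
    finally show ?case using Suc by simp
  qed
  show ?thesis
  proof (cases "\<lfloor>t\<rfloor> \<ge> 0")
    case True
    then have "t = frac t + real (nat \<lfloor>t\<rfloor>)" by (simp add: frac_def)
    then show ?thesis using nat[of "frac t" "nat \<lfloor>t\<rfloor>"] by simp
  next
    case False
    then have "frac t = t + real (nat (- \<lfloor>t\<rfloor>))" by (simp add: frac_def)
    then show ?thesis using nat[of t "nat (- \<lfloor>t\<rfloor>)"] by simp
  qed
qed

lemma gt_deriv:
  fixes G :: "real \<times> (real^2) \<Rightarrow> real"
  assumes "smooth G" "time_periodic G"
  shows "((\<lambda>y. G (t, y)) has_derivative (\<lambda>v. frechet_derivative G (at (frac t, x)) (0, v))) (at x)"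
proof -
  have e: "(\<lambda>y. G (t, y)) = (\<lambda>y. G (frac t, y))" using periodic_frac[OF assms(2)] by auto
  have dG: "G differentiable_on UNIV" using assms(1) unfolding smooth_def by (metis k_smooth.simps(2))
  have p: "((\<lambda>y. (frac t, y)) has_derivative (\<lambda>v. (0, v))) (at x)"
    by (intro has_derivative_Pair has_derivative_const has_derivative_ident)
  show ?thesis unfolding e
    using has_derivative_compose[OF p fd_works[OF dG]] by simp
qed

lemma dG_cont:
  assumes "smooth G"
  shows "continuous_on UNIV (\<lambda>p. frechet_derivative G (at p) v)"
proof -
  have "k_smooth 1 G" using assms smooth_def by blast
  then show ?thesis by simp
qed

lemma dG_linear:
  fixes G :: "real \<times> (real^2) \<Rightarrow> real"
  assumes "smooth G"
  shows "linear (\<lambda>v. frechet_derivative G (at p) (0, v))"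
proof -
  have dG: "G differentiable_on UNIV" using assms(1) unfolding smooth_def by (metis k_smooth.simps(2))
  have l: "linear (frechet_derivative G (at p))"
    using fd_works[OF dG] has_derivative_linear by blast
  show ?thesis
  proof (rule linearI)
    fix a b :: "real^2"
    have "(0::real, a + b) = (0, a) + (0, b)" by simp
    then show "frechet_derivative G (at p) (0, a + b) = frechet_derivative G (at p) (0, a) + frechet_derivative G (at p) (0, b)"
      using linear_add[OF l] by metis
  next
    fix r :: real and a :: "real^2"
    have "(0::real, r *\<^sub>R a) = r *\<^sub>R (0, a)" by simp
    then show "frechet_derivative G (at p) (0, r *\<^sub>R a) = r *\<^sub>R frechet_derivative G (at p) (0, a)"
      using linear_scale[OF l] by metis
  qed
qed

lemma lin_bound:
  fixes L :: "real^'n \<Rightarrow> real"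
  assumes "linear L"
  shows "\<bar>L v\<bar> \<le> norm v * (\<Sum>i\<in>UNIV. \<bar>L (axis i 1)\<bar>)"
proof -
  have "L v = L (\<Sum>i\<in>UNIV. v $ i *\<^sub>R axis i 1)"
    using basis_expansion[of v] by (simp add: scalar_mult_eq_scaleR)
  also have "\<dots> = (\<Sum>i\<in>UNIV. v $ i * L (axis i 1))"
    using assms by (simp add: linear_sum linear_scale)
  finally have "\<bar>L v\<bar> \<le> (\<Sum>i\<in>UNIV. \<bar>v $ i\<bar> * \<bar>L (axis i 1)\<bar>)"
    by (metis (no_types, lifting) abs_mult sum_abs sum.cong)
  also have "\<dots> \<le> (\<Sum>i\<in>UNIV. norm v * \<bar>L (axis i 1)\<bar>)"
    by (intro sum_mono mult_right_mono component_le_norm_cart) auto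
  finally show ?thesis by (simp add: sum_distrib_left)
qed



lemma K_exists:
  fixes G :: "real \<times> (real^2) \<Rightarrow> real"
  assumes "smooth G"
  shows "\<exists>K\<ge>0. \<forall>p\<in>{0..1} \<times> cball 0 2. (\<Sum>i\<in>UNIV. \<bar>frechet_derivative G (at p) (0, axis i 1)\<bar>) \<le> K"
proof -
  let ?f = "\<lambda>p. (\<Sum>i\<in>UNIV. \<bar>frechet_derivative G (at p) (0, axis i (1::real))\<bar>)"
  have c: "continuous_on UNIV ?f"
    by (intro continuous_on_sum continuous_on_rabs dG_cont[OF assms])
  have "compact (?f ` ({0..1} \<times> cball (0::real^2) 2))"
    by (rule compact_continuous_image[OF continuous_on_subset[OF c]]) (auto intro: compact_Times)
  then obtain B where "\<forall>y\<in>?f ` ({0..1} \<times> cball (0::real^2) 2). norm y \<le> B"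
    using compact_imp_bounded bounded_iff by metis
  then show ?thesis by (intro exI[of _ "max B 0"]) force
qed

lemma dgt_bound:
  fixes G :: "real \<times> (real^2) \<Rightarrow> real"
  assumes "smooth G"
    and K: "\<forall>p\<in>{0..1} \<times> cball 0 2. (\<Sum>i\<in>UNIV. \<bar>frechet_derivative G (at p) (0, axis i 1)\<bar>) \<le> K"
    and y: "norm y \<le> 2"
  shows "\<bar>frechet_derivative G (at (frac t, y)) (0, v)\<bar> \<le> K * norm v"
proof -
  have "(frac t, y) \<in> {0..1} \<times> cball 0 2" using y frac_ge_0 frac_lt_1[of t] by (auto simp: less_imp_le)
  then have k: "(\<Sum>i\<in>UNIV. \<bar>frechet_derivative G (at (frac t, y)) (0, axis i 1)\<bar>) \<le> K" using K by blast
  have "\<bar>frechet_derivative G (at (frac t, y)) (0, v)\<bar> \<le> norm v * (\<Sum>i\<in>UNIV. \<bar>frechet_derivative G (at (frac t, y)) (0, axis i 1)\<bar>)"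
    by (rule lin_bound[OF dG_linear[OF assms(1)]])
  also have "\<dots> \<le> norm v * K" by (rule mult_left_mono[OF k]) simp
  finally show ?thesis by (simp add: mult.commute)
qed

lemma G_bound:
  fixes G :: "real \<times> (real^2) \<Rightarrow> real"
  assumes sm: "smooth G" and per: "time_periodic G"
    and K: "\<forall>p\<in>{0..1} \<times> cball 0 2. (\<Sum>i\<in>UNIV. \<bar>frechet_derivative G (at p) (0, axis i 1)\<bar>) \<le> K"
    and z: "\<forall>t x. norm x = 1 \<longrightarrow> G (t, x) = 0"
    and x1: "1 < norm x" and x2: "norm x \<le> 2"
  shows "\<bar>G (t, x)\<bar> \<le> K * (norm x - 1)"
proof -
  define y where "y = (1 / norm x) *\<^sub>R x"
  have "x \<noteq> 0" using x1 by auto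
  then have ny: "norm y = 1" by (simp add: y_def)
  have "norm (x - y) = norm ((1 - 1 / norm x) *\<^sub>R x)" by (simp add: y_def algebra_simps)
  also have "\<dots> = (1 - 1 / norm x) * norm x"
  proof -
    have "1 / norm x < 1" using x1 by (simp add: divide_less_eq)
    then show ?thesis by simp
  qed
  also have "\<dots> = norm x - 1" using x1 \<open>x \<noteq> 0\<close> by (simp add: field_simps)
  finally have nxy: "norm (x - y) = norm x - 1" .
  have "norm ((\<lambda>y. G (t, y)) x - (\<lambda>y. G (t, y)) y) \<le> K * norm (x - y)"
  proof (rule differentiable_bound[of "cball 0 2" _ "\<lambda>y v. frechet_derivative G (at (frac t, y)) (0, v)"])
    show "convex (cball (0::real^2) 2)" by simp
    show "x \<in> cball 0 2" "y \<in> cball 0 2" using x2 ny by auto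
    fix z :: "real^2" assume "z \<in> cball 0 2"
    then have "norm z \<le> 2" by simp
    show "((\<lambda>y. G (t, y)) has_derivative (\<lambda>v. frechet_derivative G (at (frac t, z)) (0, v))) (at z within cball 0 2)"
      using gt_deriv[OF sm per] has_derivative_at_withinI by blast
    show "onorm (\<lambda>v. frechet_derivative G (at (frac t, z)) (0, v)) \<le> K"
      by (rule onorm_le) (use dgt_bound[OF sm K \<open>norm z \<le> 2\<close>] in auto)
  qed
  then show ?thesis using z ny nxy by simp
qed



definition hs :: "(real \<times> (real^2) \<Rightarrow> real) \<Rightarrow> nat \<Rightarrow> real \<times> (real^2) \<Rightarrow> real" where
  "hs G n p = G p * psi ((real n + 1) * (snd p \<bullet> snd p - 1))"

lemma ks_w: "k_smooth k (\<lambda>p::real \<times> (real^2). c * (snd p \<bullet> snd p - 1))"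
proof -
  have lin: "linear (\<lambda>p::real \<times> (real^2). snd p $ i)" for i
    by (rule linearI) auto
  have "k_smooth k (\<lambda>p::real \<times> (real^2). \<Sum>i\<in>UNIV. snd p $ i * snd p $ i)"
    by (intro ks_sum ks_mult ks_linear lin) auto
  then have "k_smooth k (\<lambda>p::real \<times> (real^2). c * ((\<Sum>i\<in>UNIV. snd p $ i * snd p $ i) + (-1)))"
    by (intro ks_mult ks_add ks_const)
  moreover have "(\<lambda>p::real \<times> (real^2). c * ((\<Sum>i\<in>UNIV. snd p $ i * snd p $ i) + (-1)))
      = (\<lambda>p. c * (snd p \<bullet> snd p - 1))"
    by (auto simp: inner_vec_def)
  ultimately show ?thesis by simp
qed

lemma hs_smooth: "smooth G \<Longrightarrow> smooth (hs G n)"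
  unfolding smooth_def hs_def
  by (intro allI ks_mult ks_comp[OF open_UNIV UNIV_I psi_rs ks_w]) auto

lemma hs_periodic: "time_periodic G \<Longrightarrow> time_periodic (hs G n)"
  by (simp add: time_periodic_def hs_def)

lemma hs_zero: "snd p \<bullet> snd p > 1 + 1 / (real n + 1) \<Longrightarrow> hs G n p = 0"
proof -
  assume a: "snd p \<bullet> snd p > 1 + 1 / (real n + 1)"
  have "(real n + 1) * (snd p \<bullet> snd p - 1) > (real n + 1) * (1 / (real n + 1))"
    using a by (intro mult_strict_left_mono) auto
  then have "(real n + 1) * (snd p \<bullet> snd p - 1) \<ge> 1" by simp
  then show ?thesis by (simp add: hs_def psi_zero)
qed

lemma hs_supp: "supp (hs G n) \<subseteq> {p. snd p \<bullet> snd p \<le> 1 + 1 / (real n + 1)}"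
  unfolding supp_def
proof (rule closure_minimal)
  show "{p. hs G n p \<noteq> 0} \<subseteq> {p. snd p \<bullet> snd p \<le> 1 + 1 / (real n + 1)}"
    using hs_zero by (force simp: not_le)
  show "closed {p::real \<times> (real^2). snd p \<bullet> snd p \<le> 1 + 1 / (real n + 1)}"
    by (intro closed_Collect_le continuous_intros)
qed

lemma arith_aux:
  fixes r c :: real
  assumes "r > 1" "c \<ge> 1" "c * (r^2 - 1) \<le> 1"
  shows "r \<le> 2" "c * (r - 1) \<le> 1"
proof -
  have "r - 1 \<le> r^2 - 1" using assms by (simp add: power2_eq_square)
  then have "c * (r - 1) \<le> c * (r^2 - 1)" using assms by (intro mult_left_mono) auto
  then show "c * (r - 1) \<le> 1" using assms by linarith
  have "r^2 - 1 \<ge> 0" using \<open>r - 1 \<le> r^2 - 1\<close> assms by linarith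
  then have "r^2 - 1 \<le> c * (r^2 - 1)" using assms mult_right_mono[of 1 c "r^2 - 1"] by simp
  then have "r^2 \<le> 4" using assms by linarith
  then have "r^2 \<le> 2^2" by simp
  then show "r \<le> 2" by (rule power2_le_imp_le) simp
qed

lemma hs_small:
  fixes G :: "real \<times> (real^2) \<Rightarrow> real"
  assumes sm: "smooth G" and per: "time_periodic G"
    and K: "\<forall>p\<in>{0..1} \<times> cball 0 2. (\<Sum>i\<in>UNIV. \<bar>frechet_derivative G (at p) (0, axis i 1)\<bar>) \<le> K"
    and K0: "K \<ge> 0"
    and z: "\<forall>t x. norm x = 1 \<longrightarrow> G (t, x) = 0"
    and x1: "1 < norm x"
  shows "\<bar>hs G n (t, x)\<bar> \<le> K / (real n + 1)"
proof (cases "(real n + 1) * (x \<bullet> x - 1) \<le> 1")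
  case False
  then have "x \<bullet> x > 1 + 1 / (real n + 1)" by (simp add: field_simps)
  then show ?thesis using hs_zero[of n "(t, x)" G] K0 by simp
next
  case True
  then have "(real n + 1) * (norm x ^ 2 - 1) \<le> 1" by (simp add: power2_norm_eq_inner)
  note a = arith_aux[OF x1 _ this]
  have g: "\<bar>G (t, x)\<bar> \<le> K * (norm x - 1)" using G_bound[OF sm per K z x1 a(1)] by simp
  have "\<bar>hs G n (t, x)\<bar> \<le> \<bar>G (t, x)\<bar>"
    using psi_bounds[of "(real n + 1) * (x \<bullet> x - 1)"] by (simp add: hs_def abs_mult mult_left_le)
  also have "\<dots> \<le> K * (norm x - 1)" by (rule g)
  also have "\<dots> \<le> K * (1 / (real n + 1))"
  proof -
    have "norm x - 1 \<le> 1 / (real n + 1)" using a(2) by (simp add: pos_le_divide_eq mult.commute)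
    then show ?thesis using K0 by (rule mult_left_mono)
  qed
  finally show ?thesis by simp
qed



lemma prod3_mono:
  fixes a b s A B S :: real
  assumes "0 \<le> a" "a \<le> A" "0 \<le> b" "b \<le> B" "0 \<le> s" "s \<le> S"
  shows "a * b * s \<le> A * B * S"
proof -
  have "a * b \<le> A * B" using assms by (intro mult_mono) auto
  then show ?thesis using assms by (intro mult_mono) auto
qed

lemma hs_grad:
  fixes G :: "real \<times> (real^2) \<Rightarrow> real"
  assumes sm: "smooth G" and per: "time_periodic G"
    and K: "\<forall>p\<in>{0..1} \<times> cball 0 2. (\<Sum>i\<in>UNIV. \<bar>frechet_derivative G (at p) (0, axis i 1)\<bar>) \<le> K"
    and K0: "K \<ge> 0"
    and M: "\<forall>u\<in>{0..1}. \<bar>deriv psi u\<bar> \<le> M" and M0: "M \<ge> 0"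
    and z: "\<forall>t x. norm x = 1 \<longrightarrow> G (t, x) = 0"
    and x1: "1 < norm x"
  shows "norm (spatial_grad (hs G n) t x) \<le> 2 * (4 * K * M + K)"
proof -
  define c where "c = real n + 1"
  define u where "u = c * (x \<bullet> x - 1)"
  have c1: "c \<ge> 1" by (simp add: c_def)
  have wd: "((\<lambda>y. c * (y \<bullet> y - 1)) has_derivative (\<lambda>h. c * ((x \<bullet> h + h \<bullet> x) - 0))) (at x)"
    by (intro has_derivative_mult_right has_derivative_diff has_derivative_inner has_derivative_ident has_derivative_const)
  have pd: "((\<lambda>y. psi (c * (y \<bullet> y - 1))) has_derivative (\<lambda>h. deriv psi u * (c * ((x \<bullet> h + h \<bullet> x) - 0)))) (at x)"
    using has_derivative_compose[OF wd psi_deriv[unfolded has_field_derivative_def]] by (simp add: u_def)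
  have md: "((\<lambda>y. G (t, y) * psi (c * (y \<bullet> y - 1))) has_derivative
     (\<lambda>h. G (t, x) * (deriv psi u * (c * ((x \<bullet> h + h \<bullet> x) - 0))) + frechet_derivative G (at (frac t, x)) (0, h) * psi u)) (at x)"
    using has_derivative_mult[OF gt_deriv[OF sm per] pd] by (simp add: u_def)
  have fe: "(\<lambda>y. hs G n (t, y)) = (\<lambda>y. G (t, y) * psi (c * (y \<bullet> y - 1)))"
    by (simp add: hs_def c_def)
  define D where "D = (\<lambda>h. G (t, x) * (deriv psi u * (c * ((x \<bullet> h + h \<bullet> x) - 0))) + frechet_derivative G (at (frac t, x)) (0, h) * psi u)"
  have fdD: "frechet_derivative (\<lambda>y. G (t, y) * psi (c * (y \<bullet> y - 1))) (at x) = D"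
    unfolding D_def using frechet_derivative_at[OF md] by metis
  have comp: "spatial_grad (hs G n) t x $ i = D (axis i 1)" for i
    unfolding spatial_grad_def fe fdD by simp
  have bnd: "\<bar>D (axis i 1)\<bar> \<le> 4 * K * M + K" for i
  proof (cases "u \<le> 1")
    case False
    then have "psi u = 0" "deriv psi u = 0" using psi_zero psi_deriv_zero by auto
    then show ?thesis using K0 M0 by (simp add: D_def)
  next
    case True
    have u0: "u > 0" using x1 c1
      by (simp add: u_def power2_norm_eq_inner[symmetric])
    have "c * (norm x ^ 2 - 1) \<le> 1" using True by (simp add: u_def power2_norm_eq_inner)
    note a = arith_aux[OF x1 c1 this]
    have g: "\<bar>G (t, x)\<bar> \<le> K * (norm x - 1)" using G_bound[OF sm per K z x1 a(1)] by simp
    have gc: "\<bar>G (t, x)\<bar> * c \<le> K"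
    proof -
      have "\<bar>G (t, x)\<bar> * c \<le> K * (norm x - 1) * c" using g c1 by (intro mult_right_mono) auto
      also have "\<dots> = K * (c * (norm x - 1))" by simp
      also have "\<dots> \<le> K * 1" using a(2) K0 by (intro mult_left_mono) auto
      finally show ?thesis by simp
    qed
    have dp: "\<bar>deriv psi u\<bar> \<le> M" using M u0 True by auto
    have s: "\<bar>x \<bullet> axis i 1 + axis i 1 \<bullet> x - 0\<bar> \<le> 4"
    proof -
      have "\<bar>x \<bullet> axis i 1\<bar> \<le> norm x * norm (axis i (1::real))" by (rule Cauchy_Schwarz_ineq2)
      then have "\<bar>x \<bullet> axis i 1\<bar> \<le> 2" using a(1) by simp
      then show ?thesis by (simp add: inner_commute)
    qed
    have t1: "\<bar>G (t, x) * (deriv psi u * (c * (x \<bullet> axis i 1 + axis i 1 \<bullet> x - 0)))\<bar> \<le> K * M * 4"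
    proof -
      have "\<bar>G (t, x) * (deriv psi u * (c * (x \<bullet> axis i 1 + axis i 1 \<bullet> x - 0)))\<bar>
          = (\<bar>G (t, x)\<bar> * c) * \<bar>deriv psi u\<bar> * \<bar>x \<bullet> axis i 1 + axis i 1 \<bullet> x - 0\<bar>"
        using c1 by (simp add: abs_mult)
      also have "\<dots> \<le> K * M * 4" by (rule prod3_mono) (use gc dp s c1 in auto)
      finally show ?thesis .
    qed
    have t2: "\<bar>frechet_derivative G (at (frac t, x)) (0, axis i 1) * psi u\<bar> \<le> K"
    proof -
      have "\<bar>frechet_derivative G (at (frac t, x)) (0, axis i 1)\<bar> \<le> K * norm (axis i (1::real))"
        by (rule dgt_bound[OF sm K a(1)])
      then have "\<bar>frechet_derivative G (at (frac t, x)) (0, axis i 1)\<bar> \<le> K" by simp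
      moreover have "\<bar>psi u\<bar> \<le> 1" using psi_bounds[of u] by simp
      ultimately have "\<bar>frechet_derivative G (at (frac t, x)) (0, axis i 1)\<bar> * \<bar>psi u\<bar> \<le> K * 1"
        by (intro mult_mono) auto
      then show ?thesis by (simp add: abs_mult)
    qed
    have "K * M * 4 = 4 * K * M" by simp
    then show ?thesis unfolding D_def using t1 t2 abs_triangle_ineq[of "G (t, x) * (deriv psi u * (c * (x \<bullet> axis i 1 + axis i 1 \<bullet> x - 0)))" "frechet_derivative G (at (frac t, x)) (0, axis i 1) * psi u"]
      by linarith
  qed
  have "norm (spatial_grad (hs G n) t x) \<le> (\<Sum>i\<in>UNIV. \<bar>spatial_grad (hs G n) t x $ i\<bar>)"
    by (rule norm_le_l1_cart)
  also have "\<dots> \<le> of_nat (card (UNIV :: 2 set)) * (4 * K * M + K)"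
    by (rule sum_bounded_above) (simp add: comp bnd)
  finally show ?thesis by simp
qed



lemma inner_norm_bounds:
  fixes x :: "real^2"
  assumes "x \<bullet> x \<le> 1 + 1 / (real n + 1)"
  shows "norm x \<le> 2" "n \<ge> 1 \<Longrightarrow> norm x \<le> 1 + 1 / real n"
proof -
  have nx: "norm x ^ 2 = x \<bullet> x" by (simp add: power2_norm_eq_inner)
  have "1 / (real n + 1) \<le> 1" by simp
  then have "x \<bullet> x \<le> 4" using assms by linarith
  then have "norm x ^ 2 \<le> 2 ^ 2" using nx by simp
  then show "norm x \<le> 2" by (rule power2_le_imp_le) simp
  assume n: "n \<ge> 1"
  define a where "a = 1 / real n"
  have a0: "a \<ge> 0" by (simp add: a_def)
  have "1 / (real n + 1) \<le> a" unfolding a_def using n by (intro divide_left_mono) auto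
  moreover have "1 * (1 + a) \<le> (1 + a) * (1 + a)" using a0 by (intro mult_right_mono) auto
  ultimately have "norm x ^ 2 \<le> (1 + a) ^ 2" using assms nx by (simp add: power2_eq_square)
  then show "norm x \<le> 1 + 1 / real n" unfolding a_def[symmetric] by (rule power2_le_imp_le) (simp add: a0)
qed

theorem lemma3p5:
  fixes H :: "real \<times> (real^2) \<Rightarrow> real"
  assumes "smooth_on_cyl_disc H"
    and "\<forall>t x. norm x = 1 \<longrightarrow> H (t, x) = 0"
  shows "\<exists>Hs. approximating_sequence Hs H \<and>
           (\<forall>n::nat. n \<ge> 1 \<longrightarrow> supp (Hs n) \<subseteq> UNIV \<times> cball 0 (1 + 1 / real n)) \<and>
           (\<exists>C. \<forall>n::nat. n \<ge> 1 \<longrightarrow> (\<forall>t x. norm x > 1 \<longrightarrow> norm (spatial_grad (Hs n) t x) \<le> C))"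
proof -
  obtain G where sm: "smooth G" and per: "time_periodic G"
    and agree: "\<forall>t x. norm x \<le> 1 \<longrightarrow> G (t, x) = H (t, x)"
    using assms(1) unfolding smooth_on_cyl_disc_def by blast
  have z: "\<forall>t x. norm x = 1 \<longrightarrow> G (t, x) = 0" using agree assms(2) by simp
  obtain K where K0: "K \<ge> 0"
    and K: "\<forall>p\<in>{0..1} \<times> cball 0 2. (\<Sum>i\<in>UNIV. \<bar>frechet_derivative G (at p) (0, axis i 1)\<bar>) \<le> K"
    using K_exists[OF sm] by blast
  obtain M where M0: "M \<ge> 0" and M: "\<forall>u\<in>{0..1}. \<bar>deriv psi u\<bar> \<le> M"
    using psi_deriv_bound by blast
  have suppI: "supp (hs G n) \<subseteq> {p. snd p \<bullet> snd p \<le> 1 + 1 / (real n + 1)}" for n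
    by (rule hs_supp)
  show ?thesis
  proof (intro exI[of _ "hs G"] conjI)
    show "approximating_sequence (hs G) H"
      unfolding approximating_sequence_def
    proof (intro conjI allI impI)
      fix n
      have "supp (hs G n) \<subseteq> UNIV \<times> cball 0 2"
        using suppI[of n] inner_norm_bounds(1) by fastforce
      then show "smooth_compact_supp (hs G n)"
        unfolding smooth_compact_supp_def using hs_smooth[OF sm] hs_periodic[OF per] by blast
    next
      fix n t and x :: "real^2"
      assume x: "norm x \<le> 1"
      then have "x \<bullet> x \<le> 1" by (simp add: power2_norm_eq_inner[symmetric] power_le_one)
      then have "(real n + 1) * (x \<bullet> x - 1) \<le> 0" by (simp add: mult_nonneg_nonpos)
      then show "hs G n (t, x) = H (t, x)" using x agree by (simp add: hs_def psi_one)
    next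
      fix e :: real assume e: "e > 0"
      obtain N where N: "K / e < real N" using reals_Archimedean2 by blast
      show "\<exists>N. \<forall>n\<ge>N. \<forall>t x. norm x > 1 \<longrightarrow> \<bar>hs G n (t, x)\<bar> \<le> e"
      proof (intro exI[of _ N] allI impI)
        fix n t and x :: "real^2"
        assume n: "n \<ge> N" and x: "norm x > 1"
        have "K < e * real N" using N e by (simp add: divide_less_eq mult.commute)
        also have "\<dots> \<le> e * (real n + 1)" using n e by (intro mult_left_mono) auto
        finally have "K / (real n + 1) \<le> e" by (simp add: divide_le_eq mult.commute)
        then show "\<bar>hs G n (t, x)\<bar> \<le> e" using hs_small[OF sm per K K0 z x, of n t] by linarith
      qed
    qed
    show "\<forall>n::nat. n \<ge> 1 \<longrightarrow> supp (hs G n) \<subseteq> UNIV \<times> cball 0 (1 + 1 / real n)"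
      using suppI inner_norm_bounds(2) by fastforce
    show "\<exists>C. \<forall>n::nat. n \<ge> 1 \<longrightarrow> (\<forall>t x. norm x > 1 \<longrightarrow> norm (spatial_grad (hs G n) t x) \<le> C)"
      using hs_grad[OF sm per K K0 M M0 z] by blast
  qed
qed

end
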